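(* Let $\mathbb X,\mathbb Y,\mathbb X^\sharp,\mathbb Y^\sharp$ be sets and let $c:\mathbb X\times\mathbb X^\sharp\to\overline{\mathbb R}$ and $d:\mathbb Y\times\mathbb Y^\sharp\to\overline{\mathbb R}$ be coupling functions. Let $K:\mathbb X\times\mathbb Y\to\overline{\mathbb R}$, $f:\mathbb X\to\overline{\mathbb R}$ and $g:\mathbb Y\to\overline{\mathbb R}$ be arbitrary functions. If $$f(x)\ \ge\ \inf_{y\in\mathbb Y}\big(K(x,y)\mathbin{\overset{\cdot}{+}} g(y)\big)\quad\text{for all }x\in\mathbb X,$$ then $$f^{c}(x^\sharp)\ \le\ \inf_{y^\sharp\in\mathbb Y^\sharp}\big(K^{c\mathbin{\underset{\cdot}{+}} d}(x^\sharp,y^\sharp)\mathbin{\overset{\cdot}{+}} g^{-d}(y^\sharp)\big)\quad\text{for all }x^\sharp\in\mathbb X^\sharp.$$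
   Context: $\overline{\mathbb R}=[-\infty,+\infty]$. The Moreau lower addition $\mathbin{\underset{\cdot}{+}}$ is the usual addition extended by $(+\infty)\mathbin{\underset{\cdot}{+}}(-\infty)=(-\infty)\mathbin{\underset{\cdot}{+}}(+\infty)=-\infty$; the Moreau upper addition $\mathbin{\overset{\cdot}{+}}$ is the usual addition extended by $(+\infty)\mathbin{\overset{\cdot}{+}}(-\infty)=(-\infty)\mathbin{\overset{\cdot}{+}}(+\infty)=+\infty$. For a coupling $c:\mathbb X\times\mathbb X^\sharp\to\overline{\mathbb R}$ and $f:\mathbb X\to\overline{\mathbb R}$, the Fenchel–Moreau conjugate is $f^{c}(x^\sharp)=\sup_{x\in\mathbb X}\big(c(x,x^\sharp)\mathbin{\underset{\cdot}{+}}(-f(x))\big)$. In particular $g^{-d}(y^\sharp)=\sup_{y\in\mathbb Y}\big((-d(y,y^\sharp))\mathbin{\underset{\cdot}{+}}(-g(y))\big)$. The sum coupling $c\mathbin{\underset{\cdot}{+}} d$ between $\mathbb X\times\mathbb Y$ and $\mathbb X^\sharp\times\mathbb Y^\sharp$ is $((x,y),(x^\sharp,y^\sharp))\mapsto c(x,x^\sharp)\mathbin{\underset{\cdot}{+}} d(y,y^\sharp)$, so that $K^{c\mathbin{\underset{\cdot}{+}} d}(x^\sharp,y^\sharp)=\sup_{x\in\mathbb X,y\in\mathbb Y}\big(c(x,x^\sharp)\mathbin{\underset{\cdot}{+}} d(y,y^\sharp)\mathbin{\underset{\cdot}{+}}(-K(x,y))\big)$. *)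

theory Defs
  imports "HOL-Library.Extended_Real"
begin

definition lplus :: "ereal \<Rightarrow> ereal \<Rightarrow> ereal" (infixl "+\<^sub>l" 65) where
  "a +\<^sub>l b = (if (a = \<infinity> \<and> b = -\<infinity>) \<or> (a = -\<infinity> \<and> b = \<infinity>) then -\<infinity> else a + b)"

definition uplus :: "ereal \<Rightarrow> ereal \<Rightarrow> ereal" (infixl "+\<^sub>u" 65) where
  "a +\<^sub>u b = (if (a = \<infinity> \<and> b = -\<infinity>) \<or> (a = -\<infinity> \<and> b = \<infinity>) then \<infinity> else a + b)"

definition fm_conj :: "('x \<Rightarrow> 'xs \<Rightarrow> ereal) \<Rightarrow> ('x \<Rightarrow> ereal) \<Rightarrow> 'xs \<Rightarrow> ereal" where
  "fm_conj c f xs = (SUP x. c x xs +\<^sub>l (- f x))"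

definition sum_coupling ::
  "('x \<Rightarrow> 'xs \<Rightarrow> ereal) \<Rightarrow> ('y \<Rightarrow> 'ys \<Rightarrow> ereal) \<Rightarrow> ('x \<times> 'y) \<Rightarrow> ('xs \<times> 'ys) \<Rightarrow> ereal" where
  "sum_coupling c d p q = c (fst p) (fst q) +\<^sub>l d (snd p) (snd q)"

end

theory Submission
  imports Defs
begin
lemma L1: "a \<le> a' \<Longrightarrow> b \<le> b' \<Longrightarrow> a +\<^sub>l b \<le> a' +\<^sub>l (b'::ereal)"
  unfolding lplus_def by (cases a; cases a'; cases b; cases b'; auto)
lemma L2: "- (p +\<^sub>u q) = (-p) +\<^sub>l (-q::ereal)"
  unfolding lplus_def uplus_def by (cases p; cases q; auto)
lemma L3: "(a +\<^sub>l (-k)) +\<^sub>l (-g) \<le> ((a +\<^sub>l d) +\<^sub>l (-k)) +\<^sub>u ((-d) +\<^sub>l (-g::ereal))"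
  unfolding lplus_def uplus_def by (cases a; cases k; cases g; cases d; auto)
lemma L4: assumes "\<forall>y. a +\<^sub>l s y \<le> R" shows "a +\<^sub>l (SUP y. s y) \<le> (R::ereal)"
proof (cases a)
  case (real r)
  have "(SUP y. s y) \<le> R - a"
  proof -
    have "\<forall>y. s y \<le> R - a"
    proof
      fix y
      have "a + s y \<le> R" using assms real by (auto simp: lplus_def)
      then show "s y \<le> R - a" using real by (cases "s y"; cases R; auto)
    qed
    then show ?thesis by (intro SUP_least) blast
  qed
  then show ?thesis using real by (cases "SUP y. s y"; cases R; auto simp: lplus_def)
next
  case PInf
  show ?thesis
  proof (cases "(SUP y. s y) = -\<infinity>")
    case True then show ?thesis by (simp add: lplus_def PInf)
  next
    case False
    have "\<not> (\<forall>y. s y = -\<infinity>)"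
    proof
      assume "\<forall>y. s y = -\<infinity>"
      then have "(SUP y. s y) = -\<infinity>" by simp
      with False show False by simp
    qed
    then obtain y where "s y \<noteq> -\<infinity>" by blast
    then have "R = \<infinity>" using assms[rule_format, of y] PInf by (auto simp: lplus_def)
    then show ?thesis by simp
  qed
next
  case MInf then show ?thesis by (cases "SUP y. s y") (simp_all add: lplus_def)
qed
theorem theorem1:
  fixes c :: "'x \<Rightarrow> 'xs \<Rightarrow> ereal" and d :: "'y \<Rightarrow> 'ys \<Rightarrow> ereal"
    and K :: "'x \<times> 'y \<Rightarrow> ereal" and f :: "'x \<Rightarrow> ereal" and g :: "'y \<Rightarrow> ereal"
  assumes "\<forall>x. f x \<ge> (INF y. K (x, y) +\<^sub>u g y)"
  shows "\<forall>xs. fm_conj c f xs \<le>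
           (INF ys. fm_conj (sum_coupling c d) K (xs, ys) +\<^sub>u fm_conj (\<lambda>y ys. - d y ys) g ys)"
proof (intro allI)
  fix xs
  show "fm_conj c f xs \<le> (INF ys. fm_conj (sum_coupling c d) K (xs, ys) +\<^sub>u fm_conj (\<lambda>y ys. - d y ys) g ys)"
  proof (rule INF_greatest)
    fix ys assume "ys \<in> (UNIV :: 'ys set)"
    define A where "A = fm_conj (sum_coupling c d) K (xs, ys)"
    define B where "B = fm_conj (\<lambda>y ys. - d y ys) g ys"
    have uplus_mono: "\<And>p q p' q'. p \<le> p' \<Longrightarrow> q \<le> q' \<Longrightarrow> p +\<^sub>u q \<le> p' +\<^sub>u (q'::ereal)"
      unfolding uplus_def subgoal for p q p' q' by (cases p; cases p'; cases q; cases q'; auto) done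
    show "fm_conj c f xs \<le> A +\<^sub>u B"
      unfolding fm_conj_def[of c]
    proof (rule SUP_least)
      fix x assume "x \<in> (UNIV :: 'x set)"
      have "c x xs +\<^sub>l - f x \<le> c x xs +\<^sub>l (SUP y. - (K (x, y) +\<^sub>u g y))"
      proof (rule L1)
        have "- f x \<le> - (INF y. K (x, y) +\<^sub>u g y)" using assms by simp
        also have "\<dots> = (SUP y. - (K (x, y) +\<^sub>u g y))" by (rule ereal_SUP_uminus_eq[symmetric])
        finally show "- f x \<le> (SUP y. - (K (x, y) +\<^sub>u g y))" .
      qed simp
      also have "\<dots> \<le> A +\<^sub>u B"
      proof (rule L4, rule allI)
        fix y
        have a: "sum_coupling c d (x,y) (xs,ys) +\<^sub>l - K (x,y) \<le> A"
          unfolding A_def fm_conj_def by (rule SUP_upper2[of "(x,y)"]) auto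
        have b: "- d y ys +\<^sub>l - g y \<le> B"
          unfolding B_def fm_conj_def by (rule SUP_upper2[of y]) auto
        have "c x xs +\<^sub>l - (K (x, y) +\<^sub>u g y) = (c x xs +\<^sub>l (- K (x,y))) +\<^sub>l (- g y)"
          unfolding L2 lplus_def by (cases "c x xs"; cases "K (x,y)"; cases "g y"; auto)
        also have "\<dots> \<le> ((c x xs +\<^sub>l d y ys) +\<^sub>l (- K (x,y))) +\<^sub>u (- d y ys +\<^sub>l - g y)"
          by (rule L3)
        also have "\<dots> \<le> A +\<^sub>u B"
          using a b by (intro uplus_mono) (auto simp: sum_coupling_def)
        finally show "c x xs +\<^sub>l - (K (x, y) +\<^sub>u g y) \<le> A +\<^sub>u B" .
      qed
      finally show "c x xs +\<^sub>l - f x \<le> A +\<^sub>u B" .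
    qed
  qed
qed
end
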